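(* Let $\varphi=\mathrm{vec}(A)$, $\varphi_0=\mathrm{vec}(A_0)$ with $A,A_0\in\mathbb{R}^{(p-r)\times r}$, $\|A\|_2<1$, $\|A_0\|_2<1$. If $$\|\sin\Theta\{U(\varphi),U(\varphi_0)\}\|_F\le\frac{(1-\|A_0\|_2^2)^2}{8(1+\|A_0\|_2^2)^2},$$ then $$\|U(\varphi)-U(\varphi_0)\|_F\le4\Big\{1+\frac{32\sqrt2(1+\|A_0\|_2^2)^2}{(1-\|A_0\|_2^2)^2}\Big\}\|\sin\Theta\{U(\varphi),U(\varphi_0)\}\|_F .$$ Moreover, for all such $\varphi,\varphi_0$, $\|\sin\Theta\{U(\varphi),U(\varphi_0)\}\|_F\le\sqrt2\,\|U(\varphi)-U(\varphi_0)\|_F$.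
   Context: Fix $1\le r\le p$. For $A\in\mathbb{R}^{(p-r)\times r}$, $\varphi=\mathrm{vec}(A)$, $X_\varphi=\begin{bmatrix}0_{r\times r}&-A^{T}\\ A&0\end{bmatrix}$, $I_{p\times r}=\begin{bmatrix}I_r\\0\end{bmatrix}$, and $U(\varphi)=(I_p+X_\varphi)(I_p-X_\varphi)^{-1}I_{p\times r}\in\mathbb{O}(p,r)$ (Cayley parameterization; $\mathbb{O}(p,r)$ = $p\times r$ matrices with orthonormal columns). For $U,V\in\mathbb{O}(p,r)$ with singular values $\sigma_1\ge\dots\ge\sigma_r$ of $U^TV$, the canonical angles are $\theta_i=\arccos\sigma_i$ and $\|\sin\Theta(U,V)\|_F=(\sum_{i=1}^r\sin^2\theta_i)^{1/2}$. *)

theory Defs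
  imports "HOL-Analysis.Analysis"
begin

text \<open>Index convention: the r coordinates are indexed by a finite type 'r and
the p - r remaining coordinates by a finite type 'k; the ambient index set of
size p is the sum type 'r + 'k (first block Inl = the first r coordinates).\<close>

definition spec_norm :: "real^'n^'m \<Rightarrow> real" where
  "spec_norm M = onorm (\<lambda>x. M *v x)"

definition frob_norm :: "real^'n^'m \<Rightarrow> real" where
  "frob_norm M = sqrt (\<Sum>i\<in>UNIV. \<Sum>j\<in>UNIV. (M $ i $ j)^2)"

definition orthogonal_mat :: "real^'n^'n \<Rightarrow> bool" where
  "orthogonal_mat Q \<longleftrightarrow> transpose Q ** Q = mat 1"

definition diag_mat :: "('n \<Rightarrow> real) \<Rightarrow> real^'n^'n" where
  "diag_mat s = (\<chi> i j. if i = j then s i else 0)"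

definition sing_vals :: "real^'n^'n \<Rightarrow> ('n \<Rightarrow> real)" where
  "sing_vals M = (SOME s. (\<forall>i. s i \<ge> 0) \<and>
      (\<exists>P Q. orthogonal_mat P \<and> orthogonal_mat Q \<and> M = P ** diag_mat s ** transpose Q))"

text \<open>Frobenius norm of sin Theta(U,V): canonical angles theta_i = arccos sigma_i.\<close>
definition sin_theta_F :: "real^'r^'p \<Rightarrow> real^'r^'p \<Rightarrow> real" where
  "sin_theta_F U V = sqrt (\<Sum>i\<in>UNIV. (sin (arccos (sing_vals (transpose U ** V) i)))^2)"

definition X_mat :: "real^'r::finite^'k::finite \<Rightarrow> real^('r + 'k)^('r + 'k)" where
  "X_mat A = (\<chi> a b. case (a, b) of
       (Inl i, Inr k) \<Rightarrow> - (A $ k $ i)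
     | (Inr k, Inl j) \<Rightarrow> A $ k $ j
     | _ \<Rightarrow> 0)"

definition I_pr :: "real^'r::finite^('r + 'k::finite)" where
  "I_pr = (\<chi> a j. case a of Inl i \<Rightarrow> (if i = j then 1 else 0) | Inr _ \<Rightarrow> 0)"

definition cayley_U :: "real^'r^'k \<Rightarrow> real^'r^('r + 'k)" where
  "cayley_U A = (mat 1 + X_mat A) ** matrix_inv (mat 1 - X_mat A) ** I_pr"

end

theory Submission
  imports Defs
begin


lemma frob_eq_norm: "frob_norm (M::real^'n^'m) = norm M"
  by (simp add: frob_norm_def norm_vec_def L2_set_def sum_nonneg)

lemma inner_mat: "(A::real^'n^'m) \<bullet> B = (\<Sum>i\<in>UNIV. \<Sum>j\<in>UNIV. A$i$j * B$i$j)"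
  by (simp add: inner_vec_def)

lemma mv_inner: "((A::real^'n^'m) *v x) \<bullet> y = x \<bullet> (transpose A *v y)"
  by (metis dot_lmul_matrix inner_commute transpose_matrix_vector)

lemma mm_inner1: "((A::real^'n^'m) ** B) \<bullet> (C::real^'k^'m) = B \<bullet> (transpose A ** C)"
proof -
  have "((A ** B) \<bullet> C) = (\<Sum>i\<in>UNIV. \<Sum>j\<in>UNIV. \<Sum>k\<in>UNIV. A$i$k * B$k$j * C$i$j)"
    by (simp add: inner_mat matrix_matrix_mult_def sum_distrib_right)
  also have "\<dots> = (\<Sum>i\<in>UNIV. \<Sum>k\<in>UNIV. \<Sum>j\<in>UNIV. A$i$k * B$k$j * C$i$j)"
    by (rule sum.cong[OF refl], rule sum.swap)
  also have "\<dots> = (\<Sum>k\<in>UNIV. \<Sum>i\<in>UNIV. \<Sum>j\<in>UNIV. A$i$k * B$k$j * C$i$j)"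
    by (rule sum.swap)
  also have "\<dots> = (\<Sum>k\<in>UNIV. \<Sum>j\<in>UNIV. \<Sum>i\<in>UNIV. A$i$k * B$k$j * C$i$j)"
    by (rule sum.cong[OF refl], rule sum.swap)
  also have "\<dots> = B \<bullet> (transpose A ** C)"
    by (simp add: inner_mat matrix_matrix_mult_def sum_distrib_left transpose_def mult_ac)
  finally show ?thesis .
qed

lemma mm_inner2: "((A::real^'n^'m) ** B) \<bullet> (C::real^'k^'m) = A \<bullet> (C ** transpose B)"
proof -
  have "((A ** B) \<bullet> C) = (\<Sum>i\<in>UNIV. \<Sum>j\<in>UNIV. \<Sum>k\<in>UNIV. A$i$k * B$k$j * C$i$j)"
    by (simp add: inner_mat matrix_matrix_mult_def sum_distrib_right)
  also have "\<dots> = (\<Sum>i\<in>UNIV. \<Sum>k\<in>UNIV. \<Sum>j\<in>UNIV. A$i$k * B$k$j * C$i$j)"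
    by (rule sum.cong[OF refl], rule sum.swap)
  also have "\<dots> = A \<bullet> (C ** transpose B)"
    by (simp add: inner_mat matrix_matrix_mult_def sum_distrib_left transpose_def mult_ac)
  finally show ?thesis .
qed

lemma sq_le_aux: "0 \<le> (a::real) \<Longrightarrow> 0 \<le> b \<Longrightarrow> a^2 \<le> b*a \<Longrightarrow> a \<le> b"
  by (cases "a = 0") (auto simp: power2_eq_square intro: mult_right_le_imp_le)

lemma ocol_norm_vec:
  fixes W :: "real^'r^'p"
  assumes "transpose W ** W = mat 1"
  shows "norm (W *v x) = norm x"
proof -
  have "(W *v x) \<bullet> (W *v x) = x \<bullet> x"
    by (simp add: mv_inner matrix_vector_mul_assoc assms)
  then show ?thesis by (metis norm_eq_sqrt_inner)
qed

lemma ocol_norm_mat: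
  fixes W :: "real^'r^'p" and Y :: "real^'n^'r"
  assumes "transpose W ** W = mat 1"
  shows "norm (W ** Y) = norm Y"
proof -
  have "(W ** Y) \<bullet> (W ** Y) = Y \<bullet> Y"
    by (simp add: mm_inner1 matrix_mul_assoc assms)
  then show ?thesis by (metis norm_eq_sqrt_inner)
qed

lemma ocol_contr_mat:
  fixes W :: "real^'r^'p" and Y :: "real^'n^'p"
  assumes "transpose W ** W = mat 1"
  shows "norm (transpose W ** Y) \<le> norm Y"
proof -
  have "norm (transpose W ** Y) ^ 2 = Y \<bullet> (W ** (transpose W ** Y))"
    by (simp add: power2_norm_eq_inner mm_inner1)
  also have "\<dots> \<le> norm Y * norm (W ** (transpose W ** Y))"
    by (rule Cauchy_Schwarz_ineq2[THEN order_trans[OF abs_ge_self]])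
  also have "\<dots> = norm Y * norm (transpose W ** Y)"
    by (simp add: ocol_norm_mat assms)
  finally have "norm (transpose W ** Y) ^ 2 \<le> norm Y * norm (transpose W ** Y)" .
  then show ?thesis
    by (rule sq_le_aux[OF norm_ge_zero norm_ge_zero])
qed

lemma ocol_contr_vec:
  fixes W :: "real^'r^'p"
  assumes "transpose W ** W = mat 1"
  shows "norm (transpose W *v y) \<le> norm y"
proof -
  have "norm (transpose W *v y) ^ 2 = y \<bullet> (W *v (transpose W *v y))"
    by (simp only: power2_norm_eq_inner mv_inner transpose_transpose)
  also have "\<dots> \<le> norm y * norm (W *v (transpose W *v y))"
    by (rule Cauchy_Schwarz_ineq2[THEN order_trans[OF abs_ge_self]])
  also have "\<dots> = norm y * norm (transpose W *v y)"
    by (simp add: ocol_norm_vec assms)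
  finally have "norm (transpose W *v y) ^ 2 \<le> norm y * norm (transpose W *v y)" .
  then show ?thesis
    by (rule sq_le_aux[OF norm_ge_zero norm_ge_zero])
qed

lemma orth_right_norm:
  fixes Ob :: "real^'n^'n" and Y :: "real^'n^'m"
  assumes "transpose Ob ** Ob = mat 1"
  shows "norm (Y ** Ob) = norm Y"
proof -
  have "Ob ** transpose Ob = mat 1" using assms matrix_left_right_inverse by blast
  then have "(Y ** Ob) \<bullet> (Y ** Ob) = Y \<bullet> Y"
    by (simp add: mm_inner2 matrix_mul_assoc[symmetric])
  then show ?thesis by (metis norm_eq_sqrt_inner)
qed

lemma inner_mat1: "(A::real^'n^'n) \<bullet> mat 1 = (\<Sum>i\<in>UNIV. A$i$i)"
  by (simp add: inner_mat mat_def if_distrib cong: if_cong)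

lemma ocol_normsq:
  fixes W :: "real^'r^'p"
  assumes "transpose W ** W = mat 1"
  shows "W \<bullet> W = real CARD('r)"
proof -
  have "W \<bullet> W = (W ** mat 1) \<bullet> W" by simp
  also have "\<dots> = mat 1 \<bullet> (mat 1 :: real^'r^'r)" by (simp only: mm_inner1 assms)
  also have "\<dots> = real CARD('r)" by (simp only: inner_mat1) (simp add: mat_def)
  finally show ?thesis .
qed



lemma sum_UNIV_sum: "sum f (UNIV::('a::finite+'b::finite) set) = (\<Sum>i\<in>UNIV. f (Inl i)) + (\<Sum>k\<in>UNIV. f (Inr k))"
proof -
  have "sum f (UNIV::('a+'b) set) = sum f (Inl ` UNIV) + sum f (Inr ` UNIV)"
    by (subst UNIV_sum, rule sum.union_disjoint) auto
  also have "\<dots> = (\<Sum>i\<in>UNIV. f (Inl i)) + (\<Sum>k\<in>UNIV. f (Inr k))"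
    by (simp add: sum.reindex)
  finally show ?thesis .
qed

definition blk_top :: "real^('r::finite+'k::finite) \<Rightarrow> real^'r" where "blk_top w = (\<chi> i. w $ Inl i)"
definition blk_bot :: "real^('r::finite+'k::finite) \<Rightarrow> real^'k" where "blk_bot w = (\<chi> k. w $ Inr k)"

lemma inner_blocks: "(w::real^('r::finite+'k::finite)) \<bullet> z = blk_top w \<bullet> blk_top z + blk_bot w \<bullet> blk_bot z"
  by (simp add: inner_vec_def sum_UNIV_sum blk_top_def blk_bot_def)

lemma blk_top_diff[simp]: "blk_top (w - z) = blk_top w - blk_top z" and blk_bot_diff[simp]: "blk_bot (w - z) = blk_bot w - blk_bot z"
  and blk_top_add[simp]: "blk_top (w + z) = blk_top w + blk_top z" and blk_bot_add[simp]: "blk_bot (w + z) = blk_bot w + blk_bot z"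
  by (simp_all add: blk_top_def blk_bot_def vec_eq_iff)

lemma X_transpose: "transpose (X_mat A) = - X_mat A"
  by (auto simp: vec_eq_iff X_mat_def transpose_def split: sum.split)

lemma X_top: "blk_top (X_mat A *v w) = - (transpose A *v blk_bot w)"
  by (simp add: blk_top_def blk_bot_def vec_eq_iff X_mat_def matrix_vector_mult_def sum_UNIV_sum transpose_def sum_negf)

lemma X_bot: "blk_bot (X_mat A *v w) = A *v blk_top w"
  by (simp add: blk_top_def blk_bot_def vec_eq_iff X_mat_def matrix_vector_mult_def sum_UNIV_sum)

lemma neg_mv: "(- M) *v (x::real^'n) = - (M *v x)"
  by (simp add: vec_eq_iff matrix_vector_mult_def sum_negf)

lemma X_skew: "(X_mat A *v w) \<bullet> z = - (w \<bullet> (X_mat A *v z))"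
  by (simp add: mv_inner X_transpose neg_mv)

lemma X_skew0: "w \<bullet> (X_mat A *v w) = 0"
  using X_skew[of A w w] by (simp add: inner_commute)

lemma spec_bound: "norm ((A::real^'n^'m) *v x) \<le> spec_norm A * norm x"
  unfolding spec_norm_def by (rule onorm) simp

lemma spec_nonneg: "0 \<le> spec_norm (A::real^'n^'m)"
  unfolding spec_norm_def by (rule onorm_pos_le) simp

lemma spec_bound_T: "norm (transpose (A::real^'n^'m) *v y) \<le> spec_norm A * norm y"
proof -
  have "norm (transpose A *v y) ^ 2 = y \<bullet> (A *v (transpose A *v y))"
    by (simp only: power2_norm_eq_inner mv_inner transpose_transpose)
  also have "\<dots> \<le> norm y * norm (A *v (transpose A *v y))"
    by (rule Cauchy_Schwarz_ineq2[THEN order_trans[OF abs_ge_self]])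
  also have "\<dots> \<le> norm y * (spec_norm A * norm (transpose A *v y))"
    by (rule mult_left_mono[OF spec_bound norm_ge_zero])
  finally have "norm (transpose A *v y) ^ 2 \<le> (spec_norm A * norm y) * norm (transpose A *v y)"
    by (simp add: mult_ac)
  then show ?thesis
    by (rule sq_le_aux[OF norm_ge_zero mult_nonneg_nonneg[OF spec_nonneg norm_ge_zero]])
qed

lemma norm_sq_blocks: "norm (w::real^('r::finite+'k::finite)) ^ 2 = norm (blk_top w) ^ 2 + norm (blk_bot w) ^ 2"
  by (simp add: power2_norm_eq_inner inner_blocks)

lemma X_bound: "norm (X_mat A *v w) ^ 2 \<le> (spec_norm A)^2 * norm w ^ 2"
proof -
  have "norm (X_mat A *v w) ^ 2 = norm (transpose A *v blk_bot w) ^ 2 + norm (A *v blk_top w) ^ 2"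
    by (simp add: norm_sq_blocks X_top X_bot)
  also have "\<dots> \<le> (spec_norm A * norm (blk_bot w))^2 + (spec_norm A * norm (blk_top w))^2"
    by (intro add_mono power_mono spec_bound spec_bound_T norm_ge_zero)
  also have "\<dots> = (spec_norm A)^2 * norm w ^ 2"
    by (simp add: norm_sq_blocks power_mult_distrib algebra_simps)
  finally show ?thesis .
qed

lemma IX_inv: "invertible (mat 1 - X_mat A)"
proof -
  have "\<forall>v. (mat 1 - X_mat A) *v v = 0 \<longrightarrow> v = 0"
  proof (intro allI impI)
    fix v assume "(mat 1 - X_mat A) *v v = 0"
    then have "v = X_mat A *v v" by (simp add: matrix_vector_mult_diff_rdistrib)
    then have "v \<bullet> v = 0" using X_skew0[of v A] by simp
    then show "v = 0" by simp
  qed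
  then show ?thesis
    using invertible_left_inverse matrix_left_invertible_ker by blast
qed

lemma matrix_inv_props:
  assumes "invertible (M::real^'n^'n)"
  shows "M ** matrix_inv M = mat 1 \<and> matrix_inv M ** M = mat 1"
  using assms unfolding invertible_def matrix_inv_def by (rule someI_ex)

lemma I_pr_top: "blk_top (I_pr *v x) = x" and I_pr_bot: "blk_bot (I_pr *v x) = 0"
  by (simp_all add: blk_top_def blk_bot_def I_pr_def vec_eq_iff matrix_vector_mult_def if_distrib if_distribR cong: if_cong)

lemma I_pr_inner: "(I_pr *v x) \<bullet> (I_pr *v y) = x \<bullet> y"
  by (simp add: inner_blocks I_pr_top I_pr_bot)



lemma cay_w:
  fixes A :: "real^'r::finite^'k::finite" and x :: "real^'r"
  defines "w \<equiv> matrix_inv (mat 1 - X_mat A) *v (I_pr *v x)"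
  shows "I_pr *v x = w - X_mat A *v w" "cayley_U A *v x = w + X_mat A *v w"
    "blk_bot w = A *v blk_top w"
proof -
  have N: "(mat 1 - X_mat A) ** matrix_inv (mat 1 - X_mat A) = mat 1"
    using matrix_inv_props[OF IX_inv] by blast
  have gen: "(mat 1 - X_mat A) *v (matrix_inv (mat 1 - X_mat A) *v v) = v" for v :: "real^('r+'k)"
    by (simp only: matrix_vector_mul_assoc N matrix_vector_mul_lid)
  have "(mat 1 - X_mat A) *v w = I_pr *v x"
    unfolding w_def by (rule gen)
  then show 1: "I_pr *v x = w - X_mat A *v w"
    by (simp add: matrix_vector_mult_diff_rdistrib)
  show "cayley_U A *v x = w + X_mat A *v w"
    unfolding cayley_U_def w_def
    by (simp only: matrix_vector_mul_assoc[symmetric] matrix_vector_mult_add_rdistrib matrix_vector_mul_lid)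
  have "blk_bot (I_pr *v x) = blk_bot w - blk_bot (X_mat A *v w)" by (simp only: 1 blk_bot_diff)
  then show "blk_bot w = A *v blk_top w" by (simp add: I_pr_bot X_bot)
qed

lemma cross0:
  fixes A :: "real^'r::finite^'k::finite"
  assumes "blk_bot w = A *v blk_top w" "blk_bot z = A *v blk_top z"
  shows "w \<bullet> (X_mat A *v z) = 0"
proof -
  have "w \<bullet> (X_mat A *v z) = blk_top w \<bullet> (- (transpose A *v blk_bot z)) + (A *v blk_top w) \<bullet> (A *v blk_top z)"
    by (simp add: inner_blocks X_top X_bot assms)
  also have "\<dots> = 0"
    by (simp add: assms mv_inner)
  finally show ?thesis .
qed

lemma cay_inner:
  fixes A :: "real^'r::finite^'k::finite"
  shows "(cayley_U A *v x) \<bullet> (cayley_U A *v y) = x \<bullet> y"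
proof -
  define w where "w = matrix_inv (mat 1 - X_mat A) *v (I_pr *v x)"
  define z where "z = matrix_inv (mat 1 - X_mat A) *v (I_pr *v y)"
  note wx = cay_w[where A=A and x=x, folded w_def] and zy = cay_w[where A=A and x=y, folded z_def]
  have sk: "(X_mat A *v w) \<bullet> z = - (w \<bullet> (X_mat A *v z))" by (rule X_skew)
  have "x \<bullet> y = ((I_pr::real^'r^('r+'k)) *v x) \<bullet> (I_pr *v y)" by (simp add: I_pr_inner)
  also have "\<dots> = (w - X_mat A *v w) \<bullet> (z - X_mat A *v z)" by (simp add: wx zy)
  also have "\<dots> = (w + X_mat A *v w) \<bullet> (z + X_mat A *v z)"
    using sk by (simp add: inner_diff_left inner_diff_right inner_add_left inner_add_right)
  also have "\<dots> = (cayley_U A *v x) \<bullet> (cayley_U A *v y)" by (simp add: wx zy)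
  finally show ?thesis by simp
qed

lemma cay_U1:
  fixes A :: "real^'r::finite^'k::finite"
  shows "((transpose I_pr ** cayley_U A) *v x) \<bullet> y =
     (matrix_inv (mat 1 - X_mat A) *v (I_pr *v x)) \<bullet> (matrix_inv (mat 1 - X_mat A) *v (I_pr *v y))
   - (X_mat A *v (matrix_inv (mat 1 - X_mat A) *v (I_pr *v x))) \<bullet> (X_mat A *v (matrix_inv (mat 1 - X_mat A) *v (I_pr *v y)))"
proof -
  define w where "w = matrix_inv (mat 1 - X_mat A) *v (I_pr *v x)"
  define z where "z = matrix_inv (mat 1 - X_mat A) *v (I_pr *v y)"
  note wx = cay_w[where A=A and x=x, folded w_def] and zy = cay_w[where A=A and x=y, folded z_def]
  have sk: "(X_mat A *v w) \<bullet> z = - (w \<bullet> (X_mat A *v z))" by (rule X_skew)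
  have c0: "w \<bullet> (X_mat A *v z) = 0" by (rule cross0[OF wx(3) zy(3)])
  have "((transpose I_pr ** cayley_U A) *v x) \<bullet> y = (cayley_U A *v x) \<bullet> (I_pr *v y)"
    by (simp only: matrix_vector_mul_assoc[symmetric] mv_inner transpose_transpose)
  also have "\<dots> = (w + X_mat A *v w) \<bullet> (z - X_mat A *v z)" by (simp add: wx zy)
  also have "\<dots> = w \<bullet> z - (X_mat A *v w) \<bullet> (X_mat A *v z)"
    using sk c0 by (simp add: inner_diff_left inner_diff_right inner_add_left inner_add_right)
  finally show ?thesis unfolding w_def z_def .
qed

lemma cay_orth: "transpose (cayley_U A) ** cayley_U A = mat 1"
proof -
  have "\<forall>y. (transpose (cayley_U A) ** cayley_U A) *v y = mat 1 *v y"
  proof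
    fix y
    have "\<forall>x. x \<bullet> ((transpose (cayley_U A) ** cayley_U A) *v y - y) = 0"
      by (simp add: inner_diff_right matrix_vector_mul_assoc[symmetric] mv_inner[symmetric] cay_inner del: transpose_matrix_vector)
    then have "((transpose (cayley_U A) ** cayley_U A) *v y - y) = 0"
      by (metis inner_eq_zero_iff)
    then show "(transpose (cayley_U A) ** cayley_U A) *v y = mat 1 *v y" by simp
  qed
  then show ?thesis by (simp add: matrix_eq)
qed

lemma sym_from_bilin:
  fixes M :: "real^'n^'n"
  assumes "\<And>x y. (M *v x) \<bullet> y = (M *v y) \<bullet> x"
  shows "transpose M = M"
proof -
  have "\<forall>y. transpose M *v y = M *v y"
  proof
    fix y
    have "\<forall>x. x \<bullet> (transpose M *v y - M *v y) = 0"
      using assms by (simp add: inner_diff_right mv_inner[symmetric] inner_commute del: transpose_matrix_vector)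
    then show "transpose M *v y = M *v y" by (metis inner_eq_zero_iff right_minus_eq)
  qed
  then show ?thesis by (simp add: matrix_eq)
qed

lemma cay_sym: "transpose (transpose I_pr ** cayley_U A) = transpose I_pr ** cayley_U A"
  apply (rule sym_from_bilin)
  apply (simp only: cay_U1)
  apply (simp add: inner_commute)
  done

lemma cay_pos:
  fixes A :: "real^'r::finite^'k::finite"
  assumes "spec_norm A < 1"
  shows "(1 - (spec_norm A)^2) / (1 + (spec_norm A)^2) * norm x ^ 2
           \<le> x \<bullet> ((transpose I_pr ** cayley_U A) *v x)"
proof -
  define w where "w = matrix_inv (mat 1 - X_mat A) *v (I_pr *v x)"
  note wx = cay_w[where A=A and x=x, folded w_def]
  define a where "a = spec_norm A"
  have a0: "0 \<le> a" unfolding a_def by (rule spec_nonneg)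
  have "x \<bullet> ((transpose I_pr ** cayley_U A) *v x) = w \<bullet> w - (X_mat A *v w) \<bullet> (X_mat A *v w)"
    by (simp only: inner_commute[of x] cay_U1 w_def)
  also have "\<dots> = norm w ^ 2 - norm (X_mat A *v w) ^ 2" by (simp add: power2_norm_eq_inner)
  finally have e1: "x \<bullet> ((transpose I_pr ** cayley_U A) *v x) = norm w ^ 2 - norm (X_mat A *v w) ^ 2" .
  have "norm x ^ 2 = ((I_pr::real^'r^('r+'k)) *v x) \<bullet> (I_pr *v x)" by (simp add: I_pr_inner power2_norm_eq_inner)
  also have "\<dots> = (w - X_mat A *v w) \<bullet> (w - X_mat A *v w)" by (simp add: wx)
  also have "\<dots> = norm w ^ 2 + norm (X_mat A *v w) ^ 2"
    using X_skew0[of w A] by (simp add: inner_diff_left inner_diff_right power2_norm_eq_inner inner_commute)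
  finally have e2: "norm x ^ 2 = norm w ^ 2 + norm (X_mat A *v w) ^ 2" .
  have b: "norm (X_mat A *v w) ^ 2 \<le> a^2 * norm w ^ 2" unfolding a_def by (rule X_bound)
  have "(1 - a^2) * (norm w ^ 2 + norm (X_mat A *v w) ^ 2) \<le> (1 + a^2) * (norm w ^ 2 - norm (X_mat A *v w) ^ 2)"
    using b by (simp add: algebra_simps)
  then have "(1 - a^2) / (1 + a^2) * norm x ^ 2 \<le> norm w ^ 2 - norm (X_mat A *v w) ^ 2"
    using a0 by (simp add: e2 divide_le_eq add_pos_nonneg mult.commute)
  then show ?thesis using e1 a_def by simp
qed



lemma real_aux: assumes "0 \<le> (a::real)" "\<And>t. 0 < t \<Longrightarrow> 2*t*a \<le> t^2*c" shows "a = 0"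
proof (rule ccontr)
  assume "a \<noteq> 0" then have a: "a > 0" using assms(1) by simp
  define t where "t = a / (\<bar>c\<bar> + 1)"
  have t: "t > 0" using a by (simp add: t_def add_pos_nonneg)
  have "2*t*a \<le> t^2*c" by (rule assms(2)[OF t])
  then have "2*a \<le> t*c" using t by (simp add: power2_eq_square mult.assoc)
  also have "\<dots> \<le> t*\<bar>c\<bar>" using t by (simp add: mult_left_mono)
  also have "\<dots> < a" using a by (simp add: t_def field_simps)
  finally show False using a by simp
qed

lemma sym_inner: assumes "transpose S = (S::real^'n^'n)" shows "(S *v x) \<bullet> y = x \<bullet> (S *v y)"
  using mv_inner[of S x y] assms by simp

lemma spectral_sub:
  fixes S :: "real^'n^'n"
  assumes sym: "transpose S = S"
  shows "subspace W \<Longrightarrow> (\<forall>x\<in>W. S *v x \<in> W) \<Longrightarrow> dim W = n \<Longrightarrow>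
    \<exists>B. B \<subseteq> W \<and> pairwise orthogonal B \<and> (\<forall>x\<in>B. norm x = 1 \<and> (\<exists>l. S *v x = l *\<^sub>R x)) \<and> card B = n \<and> finite B"
proof (induction n arbitrary: W)
  case 0
  then show ?case by (intro exI[of _ "{}"]) auto
next
  case (Suc n)
  note W = Suc.prems(1) and inv = Suc.prems(2) and dW = Suc.prems(3)
  define q where "q = (\<lambda>x. x \<bullet> (S *v x))"
  have "W \<noteq> {0}" using dW by auto
  moreover have "0 \<in> W" using W by (simp add: subspace_0)
  ultimately obtain u where u: "u \<in> W" "u \<noteq> 0" by blast
  define K where "K = W \<inter> sphere 0 1"
  have "compact K" unfolding K_def
    by (intro closed_Int_compact closed_subspace W compact_sphere)
  moreover have "(1 / norm u) *\<^sub>R u \<in> K" using u W by (simp add: K_def subspace_scale)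
  then have "K \<noteq> {}" by blast
  moreover have "continuous_on K q" unfolding q_def
    by (intro continuous_intros linear_continuous_on bounded_linear_inner_left) (simp add: bounded_linear_compose)
  ultimately obtain x0 where x0K: "x0 \<in> K" and x0max: "\<And>y. y \<in> K \<Longrightarrow> q y \<le> q x0"
    using continuous_attains_sup by metis
  define l where "l = q x0"
  have x0W: "x0 \<in> W" and nx0: "norm x0 = 1" using x0K by (auto simp: K_def)
  have qle: "q y \<le> l * norm y ^ 2" if "y \<in> W" for y
  proof (cases "y = 0")
    case True then show ?thesis by (simp add: q_def)
  next
    case False
    then have "(1 / norm y) *\<^sub>R y \<in> K" using that W by (simp add: K_def subspace_scale)
    then have "q ((1 / norm y) *\<^sub>R y) \<le> l" using x0max l_def by blast
    moreover have "q ((1 / norm y) *\<^sub>R y) = q y / norm y ^ 2"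
      by (simp add: q_def matrix_vector_mult_scaleR power2_eq_square)
    ultimately show ?thesis using False by (simp add: divide_le_eq mult.commute)
  qed
  define d where "d = S *v x0 - l *\<^sub>R x0"
  have dinW: "d \<in> W" unfolding d_def using W inv x0W by (simp add: subspace_diff subspace_scale)
  have x0x0: "x0 \<bullet> x0 = 1" using nx0 by (simp add: norm_eq_1)
  have lq: "x0 \<bullet> (S *v x0) = l" by (simp add: l_def q_def)
  have Sx0: "S *v x0 = d + l *\<^sub>R x0" by (simp add: d_def)
  have dx0: "d \<bullet> x0 = 0" using lq x0x0 by (simp add: d_def inner_diff_left inner_diff_right inner_commute)
  have e1: "x0 \<bullet> (S *v d) = d \<bullet> d"
    using sym_inner[OF sym, of x0 d] Sx0 dx0 by (simp add: inner_add_left inner_add_right inner_commute)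
  have e2: "d \<bullet> (S *v x0) = d \<bullet> d"
    using Sx0 dx0 by (simp add: inner_add_right inner_commute)
  have "2*t*(d \<bullet> d) \<le> t^2*(l * (d \<bullet> d) - q d)" if "t > 0" for t
  proof -
    have yW: "x0 + t *\<^sub>R d \<in> W" using W x0W dinW by (simp add: subspace_add subspace_scale)
    have "q (x0 + t *\<^sub>R d) = l + 2*t*(d \<bullet> d) + t^2 * q d"
      by (simp add: q_def matrix_vector_right_distrib matrix_vector_mult_scaleR inner_add_left inner_add_right e1 e2 lq power2_eq_square algebra_simps)
    moreover have "norm (x0 + t *\<^sub>R d) ^ 2 = 1 + t^2 * (d \<bullet> d)"
      using x0x0 dx0 unfolding power2_norm_eq_inner by (simp add: inner_add_left inner_add_right inner_commute power2_eq_square algebra_simps)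
    ultimately have "l + 2*t*(d \<bullet> d) + t^2 * q d \<le> l * (1 + t^2 * (d \<bullet> d))"
      using qle[OF yW] by simp
    then show ?thesis by (simp add: algebra_simps)
  qed
  then have "d \<bullet> d = 0" by (intro real_aux[of "d \<bullet> d" "l * (d \<bullet> d) - q d"]) auto
  then have eig: "S *v x0 = l *\<^sub>R x0" using Sx0 by simp
  define W' where "W' = {y\<in>W. x0 \<bullet> y = 0}"
  have W': "subspace W'" using W unfolding W'_def subspace_def
    by (auto simp: inner_add_right)
  have inv': "\<forall>x\<in>W'. S *v x \<in> W'"
  proof
    fix y assume y: "y \<in> W'"
    have "x0 \<bullet> (S *v y) = (S *v x0) \<bullet> y" by (simp add: sym_inner[OF sym])
    also have "\<dots> = 0" using y eig by (simp add: W'_def)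
    finally show "S *v y \<in> W'" using y inv by (simp add: W'_def)
  qed
  have seteq: "{y\<in>W. \<forall>x\<in>span {x0}. orthogonal x y} = W'"
  proof (intro set_eqI iffI)
    fix y assume "y \<in> {y\<in>W. \<forall>x\<in>span {x0}. orthogonal x y}"
    then show "y \<in> W'" by (auto simp: W'_def orthogonal_def span_base)
  next
    fix y assume y: "y \<in> W'"
    have "orthogonal x y" if "x \<in> span {x0}" for x
      using orthogonal_to_span[OF that, of y] y by (auto simp: W'_def orthogonal_def inner_commute)
    then show "y \<in> {y\<in>W. \<forall>x\<in>span {x0}. orthogonal x y}" using y by (auto simp: W'_def)
  qed
  have "x0 \<noteq> 0" using nx0 by auto
  have "dim {y\<in>W. \<forall>x\<in>span {x0}. orthogonal x y} + dim (span {x0}) = dim W"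
    by (rule dim_subspace_orthogonal_to_vectors) (auto simp: W x0W span_minimal)
  then have dW': "dim W' = n" using dW \<open>x0 \<noteq> 0\<close> by (simp add: seteq)
  obtain B' where B': "B' \<subseteq> W'" "pairwise orthogonal B'"
      "\<forall>x\<in>B'. norm x = 1 \<and> (\<exists>l. S *v x = l *\<^sub>R x)" "card B' = n" "finite B'"
    using Suc.IH[OF W' inv' dW'] by blast
  have nin: "x0 \<notin> B'" using B'(1) x0x0 by (auto simp: W'_def)
  show ?case
  proof (intro exI[of _ "insert x0 B'"] conjI)
    show "insert x0 B' \<subseteq> W" using B'(1) x0W by (auto simp: W'_def)
    show "pairwise orthogonal (insert x0 B')"
      using B'(1,2) by (auto simp: pairwise_insert W'_def orthogonal_def inner_commute)
    show "\<forall>x\<in>insert x0 B'. norm x = 1 \<and> (\<exists>l. S *v x = l *\<^sub>R x)"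
      using B'(3) nx0 eig by auto
    show "card (insert x0 B') = Suc n" using B'(4,5) nin by simp
    show "finite (insert x0 B')" using B'(5) by simp
  qed
qed



lemma spectral:
  fixes S :: "real^'n^'n"
  assumes sym: "transpose S = S"
  obtains f :: "'n \<Rightarrow> real^'n" and l :: "'n \<Rightarrow> real" where "\<forall>i j. f i \<bullet> f j = (if i = j then 1 else 0)" "\<forall>i. S *v f i = l i *\<^sub>R f i"
proof -
  have "dim (UNIV :: (real^'n) set) = CARD('n)" by simp
  then obtain B where B: "pairwise orthogonal B" "\<forall>x\<in>B. norm x = 1 \<and> (\<exists>l. S *v x = l *\<^sub>R x)"
     "card B = CARD('n)" "finite B"
    using spectral_sub[OF sym, of UNIV "CARD('n)"] by auto
  obtain f where f: "bij_betw f (UNIV::'n set) B"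
    using finite_same_card_bij[of "UNIV::'n set" B] B by auto
  have fB: "f i \<in> B" for i using f by (auto simp: bij_betw_def)
  define l where "l i = (SOME c. S *v f i = c *\<^sub>R f i)" for i
  have "S *v f i = l i *\<^sub>R f i" for i
    unfolding l_def by (rule someI_ex) (use B(2) fB in blast)
  then have E: "\<forall>i. S *v f i = l i *\<^sub>R f i" by blast
  have "f i \<bullet> f j = (if i = j then 1 else 0)" for i j
  proof (cases "i = j")
    case True then show ?thesis using B(2) fB by (simp add: norm_eq_1)
  next
    case False
    then have "f i \<noteq> f j" using f by (auto simp: bij_betw_def inj_on_def)
    then show ?thesis using B(1) fB False by (auto simp: pairwise_def orthogonal_def)
  qed
  then have O: "\<forall>i j. f i \<bullet> f j = (if i = j then 1 else 0)" by blast
  show ?thesis by (rule that[OF O E])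
qed

lemma orth_extend:
  fixes g :: "'n \<Rightarrow> real^'n"
  assumes gK: "\<forall>i\<in>K. \<forall>j\<in>K. g i \<bullet> g j = (if i = j then 1 else 0)"
  obtains h where "\<forall>i j. h i \<bullet> h j = (if i = j then 1 else 0)" "\<forall>i\<in>K. h i = g i"
proof -
  define T where "T = {y \<in> UNIV. \<forall>x\<in>span (g ` K). orthogonal x y}"
  have injg: "inj_on g K"
  proof (rule inj_onI)
    fix i j assume "i \<in> K" "j \<in> K" "g i = g j"
    then show "i = j" using gK by (metis one_neq_zero)
  qed
  have ind: "independent (g ` K)"
  proof (rule pairwise_orthogonal_independent)
    show "pairwise orthogonal (g ` K)"
      using gK by (auto simp: pairwise_def orthogonal_def)
    show "0 \<notin> g ` K" using gK by force
  qed
  have dimgK: "dim (span (g ` K)) = card K"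
    using ind injg by (simp add: dim_eq_card_independent card_image)
  have "dim T + dim (span (g ` K)) = dim (UNIV :: (real^'n) set)"
    unfolding T_def by (rule dim_subspace_orthogonal_to_vectors) auto
  then have dT: "dim T = card (UNIV - K)"
    using dimgK by (simp add: card_Diff_subset)
  have sT: "subspace T" unfolding T_def subspace_def
    by (auto simp: orthogonal_clauses)
  obtain C where C: "C \<subseteq> T" "pairwise orthogonal C" "\<And>x. x \<in> C \<Longrightarrow> norm x = 1"
      "independent C" "card C = dim T"
    using orthonormal_basis_subspace[OF sT] by metis
  have "finite C" using C(4) by (rule finiteI_independent)
  then obtain e where e: "bij_betw e (UNIV - K) C"
    using finite_same_card_bij[of "UNIV - K" C] C(5) dT by auto
  have eC: "i \<notin> K \<Longrightarrow> e i \<in> C" for i using e by (auto simp: bij_betw_def)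
  define h where "h i = (if i \<in> K then g i else e i)" for i
  have "h i \<bullet> h j = (if i = j then 1 else 0)" for i j
  proof (cases "i \<in> K"; cases "j \<in> K")
    assume "i \<in> K" "j \<in> K" then show ?thesis using gK by (simp add: h_def)
  next
    assume i: "i \<in> K" and j: "j \<notin> K"
    have "orthogonal (g i) (e j)" using C(1) eC[OF j] i by (auto simp: T_def span_base)
    then show ?thesis using i j by (auto simp: h_def orthogonal_def)
  next
    assume i: "i \<notin> K" and j: "j \<in> K"
    have "orthogonal (g j) (e i)" using C(1) eC[OF i] j by (auto simp: T_def span_base)
    then show ?thesis using i j by (auto simp: h_def orthogonal_def inner_commute)
  next
    assume i: "i \<notin> K" and j: "j \<notin> K"
    show ?thesis
    proof (cases "i = j")
      case True then show ?thesis using C(3) eC[OF i] i by (simp add: h_def norm_eq_1)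
    next
      case False
      then have "e i \<noteq> e j" using e i j by (auto simp: bij_betw_def inj_on_def)
      then show ?thesis using C(2) eC[OF i] eC[OF j] i j False
        by (auto simp: h_def pairwise_def orthogonal_def)
    qed
  qed
  then show ?thesis using that[of h] by (simp add: h_def)
qed

definition mcols :: "('n \<Rightarrow> real^'m) \<Rightarrow> real^'n^'m" where
  "mcols f = (\<chi> i j. f j $ i)"

lemma mcols_orth: "\<forall>i j. f i \<bullet> f j = (if i = j then 1 else 0) \<Longrightarrow> transpose (mcols f) ** mcols f = mat 1"
  by (simp add: vec_eq_iff matrix_matrix_mult_def transpose_def mat_def inner_vec_def mcols_def mult.commute)

lemma mcols_mult: "(M::real^'m^'k) ** mcols f = mcols (\<lambda>j. M *v f j)"
  by (simp add: vec_eq_iff matrix_matrix_mult_def matrix_vector_mult_def mcols_def)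

lemma mcols_diag: "mcols (\<lambda>j. s j *\<^sub>R h j) = mcols h ** diag_mat s"
  by (simp add: vec_eq_iff matrix_matrix_mult_def mcols_def diag_mat_def if_distrib if_distribR mult.commute cong: if_cong)

lemma svd_exists:
  fixes M :: "real^'n^'n"
  shows "\<exists>s. (\<forall>i. s i \<ge> 0) \<and> (\<exists>P Q. orthogonal_mat P \<and> orthogonal_mat Q \<and> M = P ** diag_mat s ** transpose Q)"
proof -
  have "transpose (transpose M ** M) = transpose M ** M"
    by (simp add: matrix_transpose_mul)
  then obtain f :: "'n \<Rightarrow> real^'n" and l :: "'n \<Rightarrow> real" where fo: "\<forall>i j. f i \<bullet> f j = (if i = j then 1 else 0)"
      and fe: "\<forall>i. (transpose M ** M) *v f i = l i *\<^sub>R f i"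
    by (rule spectral)
  define s where "s j = norm (M *v f j)" for j
  have Mf: "(M *v f i) \<bullet> (M *v f j) = (if i = j then s j ^ 2 else 0)" for i j
  proof -
    have "(M *v f i) \<bullet> (M *v f j) = f i \<bullet> ((transpose M ** M) *v f j)"
      by (simp only: mv_inner matrix_vector_mul_assoc)
    also have "\<dots> = l j * (f i \<bullet> f j)" using fe by simp
    finally have eq: "(M *v f i) \<bullet> (M *v f j) = l j * (f i \<bullet> f j)" .
    show ?thesis
    proof (cases "i = j")
      case True then show ?thesis by (simp add: s_def power2_norm_eq_inner)
    next
      case False then show ?thesis using eq fo by simp
    qed
  qed
  define K where "K = {j. s j \<noteq> 0}"
  define g where "g j = (1 / s j) *\<^sub>R (M *v f j)" for j
  have "\<forall>i\<in>K. \<forall>j\<in>K. g i \<bullet> g j = (if i = j then 1 else 0)"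
    using Mf by (auto simp: K_def g_def power2_eq_square)
  then obtain h where ho: "\<forall>i j. h i \<bullet> h j = (if i = j then 1 else 0)" and hg: "\<forall>i\<in>K. h i = g i"
    using orth_extend[of K g] by blast
  have Mfh: "M *v f j = s j *\<^sub>R h j" for j
  proof (cases "s j = 0")
    case True then show ?thesis by (simp add: s_def)
  next
    case False then show ?thesis using hg by (simp add: K_def g_def)
  qed
  define P where "P = mcols h"
  define Q where "Q = mcols f"
  have oQ: "transpose Q ** Q = mat 1" unfolding Q_def by (rule mcols_orth[OF fo])
  have oP: "transpose P ** P = mat 1" unfolding P_def by (rule mcols_orth[OF ho])
  have QQ: "Q ** transpose Q = mat 1" using oQ matrix_left_right_inverse by blast
  have "M ** Q = P ** diag_mat s"
    unfolding Q_def P_def by (simp add: mcols_mult Mfh mcols_diag)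
  then have "M = P ** diag_mat s ** transpose Q"
    by (metis QQ matrix_mul_assoc matrix_mul_rid)
  moreover have "\<forall>i. s i \<ge> 0" by (simp add: s_def)
  ultimately show ?thesis using oP oQ unfolding orthogonal_mat_def by blast
qed

lemma sing_vals_props:
  fixes M :: "real^'n^'n"
  shows "(\<forall>i. sing_vals M i \<ge> 0) \<and> (\<exists>P Q. orthogonal_mat P \<and> orthogonal_mat Q \<and> M = P ** diag_mat (sing_vals M) ** transpose Q)"
  unfolding sing_vals_def by (rule someI_ex[OF svd_exists])



lemma col_inner: "(Y::real^'n^'m) \<bullet> (B ** Z) = (\<Sum>j\<in>UNIV. (column j Y) \<bullet> (B *v column j Z))"
  unfolding inner_mat
  by (simp add: inner_vec_def column_def matrix_matrix_mult_def matrix_vector_mult_def) (rule sum.swap)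

lemma inner_transpose: "transpose (Y::real^'n^'m) \<bullet> transpose Z = Y \<bullet> Z"
  unfolding inner_mat by (simp add: transpose_def) (rule sum.swap)

lemma norm_transpose: "norm (transpose (Y::real^'n^'m)) = norm Y"
  by (simp add: norm_eq_sqrt_inner inner_transpose)

lemma norm_sq_cols: "norm (Y::real^'n^'m) ^ 2 = (\<Sum>j\<in>UNIV. norm (column j Y) ^ 2)"
  using col_inner[of Y "mat 1" Y] by (simp add: power2_norm_eq_inner)

lemma diag_inner: "diag_mat s \<bullet> (Z::real^'n^'n) = (\<Sum>i\<in>UNIV. s i * Z$i$i)"
  unfolding inner_mat by (simp add: diag_mat_def if_distrib if_distribR cong: if_cong)

lemma diag_transpose: "transpose (diag_mat s) = diag_mat s"
  by (simp add: vec_eq_iff diag_mat_def transpose_def)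

lemma diag_axis: "diag_mat s *v axis i 1 = s i *\<^sub>R axis i 1"
  by (simp only: matrix_vector_mult_basis) (simp add: column_def diag_mat_def vec_eq_iff axis_def)

lemma svd_facts:
  fixes U V :: "real^'r^'p" and P Q :: "real^'r^'r"
  assumes oU: "transpose U ** U = mat 1" and oV: "transpose V ** V = mat 1"
    and oP: "transpose P ** P = mat 1" and oQ: "transpose Q ** Q = mat 1"
    and s0: "\<forall>i. s i \<ge> 0"
    and M: "transpose V ** U = P ** diag_mat s ** transpose Q"
  shows "\<forall>i. s i \<le> 1" "(P ** transpose Q) \<bullet> (transpose V ** U) = sum s UNIV"
    "mat 1 \<bullet> (transpose V ** U) \<le> sum s UNIV"
proof -
  have QQ: "Q ** transpose Q = mat 1" using oQ matrix_left_right_inverse by blast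
  have PP: "P ** transpose P = mat 1" using oP matrix_left_right_inverse by blast
  have MQ: "(transpose V ** U) ** Q = P ** diag_mat s"
    by (simp add: M matrix_mul_assoc[symmetric] oQ)
  show "\<forall>i. s i \<le> 1"
  proof
    fix i
    have "(transpose V ** U) *v (Q *v axis i 1) = s i *\<^sub>R (P *v axis i 1)"
      by (simp only: matrix_vector_mul_assoc MQ) (simp add: matrix_vector_mul_assoc[symmetric] diag_axis matrix_vector_mult_scaleR)
    then have "norm ((transpose V ** U) *v (Q *v axis i 1)) = s i"
      using s0 by (simp add: ocol_norm_vec[OF oP])
    moreover have "norm ((transpose V ** U) *v (Q *v axis i 1)) \<le> 1"
    proof -
      have "norm ((transpose V ** U) *v (Q *v axis i 1)) = norm (transpose V *v (U *v (Q *v axis i 1)))"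
        by (simp add: matrix_vector_mul_assoc matrix_mul_assoc)
      also have "\<dots> \<le> norm (U *v (Q *v axis i 1))" by (rule ocol_contr_vec[OF oV])
      also have "\<dots> = 1" by (simp add: ocol_norm_vec[OF oU] ocol_norm_vec[OF oQ])
      finally show ?thesis .
    qed
    ultimately show "s i \<le> 1" by simp
  qed
  have M': "transpose V ** U = P ** (diag_mat s ** transpose Q)" by (simp add: M matrix_mul_assoc)
  have "(P ** transpose Q) \<bullet> (transpose V ** U) = transpose Q \<bullet> (diag_mat s ** transpose Q)"
    by (simp only: M' mm_inner1 matrix_mul_assoc oP matrix_mul_lid)
  also have "\<dots> = diag_mat s \<bullet> mat 1"
    by (simp only: inner_commute[of "transpose Q"] mm_inner2 transpose_transpose oQ)
  also have "\<dots> = sum s UNIV" by (simp add: diag_inner mat_def)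
  finally show "(P ** transpose Q) \<bullet> (transpose V ** U) = sum s UNIV" .
  define Z where "Z = transpose P ** Q"
  have oZ: "transpose Z ** Z = mat 1"
    unfolding Z_def by (simp add: matrix_transpose_mul matrix_mul_assoc) (simp add: matrix_mul_assoc[symmetric] PP oQ)
  have Zle: "Z$i$i \<le> 1" for i
  proof -
    have "Z$i$i = (Z *v axis i 1) $ i" by (simp add: matrix_vector_mult_basis column_def)
    also have "\<dots> \<le> norm (Z *v axis i 1)" using component_le_norm_cart abs_ge_self order_trans by blast
    also have "\<dots> = 1" by (simp add: ocol_norm_vec[OF oZ])
    finally show ?thesis .
  qed
  have "mat 1 \<bullet> (transpose V ** U) = (diag_mat s ** transpose Q) \<bullet> (transpose P ** mat 1)"
    by (simp only: M' inner_commute[of "mat 1"] mm_inner1)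
  also have "\<dots> = diag_mat s \<bullet> Z"
    by (simp only: mm_inner2 transpose_transpose matrix_mul_rid Z_def)
  also have "\<dots> = (\<Sum>i\<in>UNIV. s i * Z$i$i)" by (rule diag_inner)
  also have "\<dots> \<le> (\<Sum>i\<in>UNIV. s i)"
    by (rule sum_mono) (use s0 Zle in \<open>simp add: mult_left_le\<close>)
  finally show "mat 1 \<bullet> (transpose V ** U) \<le> sum s UNIV" .
qed



lemma transpose_diff: "transpose ((A::real^'n^'m) - B) = transpose A - transpose B"
  by (simp add: vec_eq_iff transpose_def)

lemma mm_diff_l: "(A::real^'n^'m) ** (B - C) = A ** B - A ** C"
  by (simp add: vec_eq_iff matrix_matrix_mult_def sum_subtractf right_diff_distrib)

lemma mm_diff_r: "((A::real^'n^'m) - B) ** C = A ** C - B ** C"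
  by (simp add: vec_eq_iff matrix_matrix_mult_def sum_subtractf left_diff_distrib)

lemma orth_from_inner:
  fixes W :: "real^'r^'p"
  assumes "\<And>x y. (W *v x) \<bullet> (W *v y) = x \<bullet> y"
  shows "transpose W ** W = mat 1"
proof -
  have "\<forall>y. (transpose W ** W) *v y = mat 1 *v y"
  proof
    fix y
    have "\<forall>x. x \<bullet> ((transpose W ** W) *v y - y) = 0"
      using assms by (simp add: inner_diff_right matrix_vector_mul_assoc[symmetric] mv_inner[symmetric] del: transpose_matrix_vector)
    then have "((transpose W ** W) *v y - y) = 0"
      by (metis inner_eq_zero_iff)
    then show "(transpose W ** W) *v y = mat 1 *v y" by simp
  qed
  then show ?thesis by (simp add: matrix_eq)
qed

lemma Ipr_orth: "transpose (I_pr :: real^'r::finite^('r+'k::finite)) ** I_pr = mat 1"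
  by (rule orth_from_inner) (rule I_pr_inner)

lemma sin_arccos_sq: "-1 \<le> y \<Longrightarrow> y \<le> 1 \<Longrightarrow> (sin (arccos y))^2 = 1 - y^2"
  by (simp add: sin_arccos abs_square_le_1 abs_le_iff)

lemma final_const:
  fixes a :: real
  assumes "0 \<le> a" "a < 1"
  shows "sqrt 2 * (1 + 2 / ((1 - a^2) / (1 + a^2))) \<le> 4 * (1 + 32 * sqrt 2 * (1 + a^2)^2 / (1 - a^2)^2)"
proof -
  define c where "c = (1 + a^2) / (1 - a^2)"
  have a2: "a^2 < 1" using assms by (simp add: power_less_one_iff abs_less_iff)
  have c1: "1 \<le> c" unfolding c_def using a2 by (simp add: le_divide_eq)
  have e1: "2 / ((1 - a^2) / (1 + a^2)) = 2 * c" unfolding c_def by simp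
  have e2: "(1 + a^2)^2 / (1 - a^2)^2 = c^2" unfolding c_def by (simp add: power_divide)
  have s2: "sqrt 2 \<le> 2" by (rule real_le_lsqrt) auto
  have s0: "0 \<le> sqrt 2" by simp
  have "c \<le> c^2" using c1 by (simp add: power2_eq_square)
  then have k: "sqrt 2 * (2*c) \<le> sqrt 2 * (128 * c^2)" using c1 s0 by (intro mult_left_mono) auto
  have e3: "32 * sqrt 2 * (1 + a^2)^2 / (1 - a^2)^2 = 32 * sqrt 2 * c^2"
    using e2 by (metis times_divide_eq_right)
  have f1: "sqrt 2 * (1 + 2*c) = sqrt 2 + sqrt 2 * (2*c)" by (simp add: algebra_simps)
  have f2: "4*(1 + 32 * sqrt 2 * c^2) = 4 + sqrt 2 * (128 * c^2)" by (simp add: algebra_simps)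
  show ?thesis unfolding e1 e3 f1 f2 using s2 k by linarith
qed



lemma sq_aux1: "1 - (x::real)^2 \<le> 2 - 2*x"
proof -
  have "0 \<le> (1-x)^2" by simp
  moreover have "(1-x)^2 = 1 - 2*x + x^2" by (simp add: power2_diff)
  ultimately show ?thesis by linarith
qed

lemma sq_aux2: "0 \<le> (x::real) \<Longrightarrow> x \<le> 1 \<Longrightarrow> 2 - 2*x \<le> 2*(1 - x^2)"
proof -
  assume "0 \<le> x" "x \<le> 1"
  then have "x * x \<le> x" by (simp add: mult_left_le)
  then show ?thesis by (simp add: power2_eq_square)
qed

theorem theorem5:
  fixes A A0 :: "real^'r::finite^'k::finite"
  assumes "spec_norm A < 1" and "spec_norm A0 < 1"
  shows "(sin_theta_F (cayley_U A) (cayley_U A0)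
            \<le> (1 - (spec_norm A0)^2)^2 / (8 * (1 + (spec_norm A0)^2)^2)
          \<longrightarrow> frob_norm (cayley_U A - cayley_U A0)
            \<le> 4 * (1 + 32 * sqrt 2 * (1 + (spec_norm A0)^2)^2 / (1 - (spec_norm A0)^2)^2)
                * sin_theta_F (cayley_U A) (cayley_U A0))
       \<and> sin_theta_F (cayley_U A) (cayley_U A0) \<le> sqrt 2 * frob_norm (cayley_U A - cayley_U A0)"
proof -
  define U where "U = cayley_U A"
  define V where "V = cayley_U A0"
  define a0 where "a0 = spec_norm A0"
  define m where "m = (1 - a0^2) / (1 + a0^2)"
  define n where "n = real CARD('r)"
  have a00: "0 \<le> a0" unfolding a0_def by (rule spec_nonneg)
  have a01: "a0 < 1" using assms(2) by (simp add: a0_def)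
  have a02: "a0^2 < 1" using a00 a01 by (simp add: power_less_one_iff abs_less_iff)
  have m0: "0 < m" unfolding m_def using a02 by (simp add: add_pos_nonneg)
  have oU: "transpose U ** U = mat 1" unfolding U_def by (rule cay_orth)
  have oV: "transpose V ** V = mat 1" unfolding V_def by (rule cay_orth)
  define s where "s = sing_vals (transpose U ** V)"
  obtain P Q where s0: "\<forall>i. s i \<ge> 0" and oP: "transpose P ** P = mat 1" and oQ: "transpose Q ** Q = mat 1"
    and UV: "transpose U ** V = P ** diag_mat s ** transpose Q"
    using sing_vals_props[of "transpose U ** V"] unfolding s_def orthogonal_mat_def by blast
  have VU: "transpose V ** U = Q ** diag_mat s ** transpose P"
  proof -
    have "transpose V ** U = transpose (transpose U ** V)" by (simp add: matrix_transpose_mul)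
    also have "\<dots> = Q ** diag_mat s ** transpose P"
      by (simp add: UV matrix_transpose_mul diag_transpose matrix_mul_assoc)
    finally show ?thesis .
  qed
  note sf = svd_facts[OF oU oV oQ oP s0 VU]
  define \<sigma> where "\<sigma> = sum s UNIV"
  have s1: "\<forall>i. s i \<le> 1" by (rule sf(1))
  have st_def': "sin_theta_F U V = sqrt (\<Sum>i\<in>UNIV. 1 - (s i)^2)"
  proof -
    have "(sin (arccos (s i)))^2 = 1 - (s i)^2" for i
      using s0 s1 by (intro sin_arccos_sq) (auto intro: order_trans[of _ 0])
    then show ?thesis by (simp add: sin_theta_F_def s_def)
  qed
  define st where "st = sin_theta_F U V"
  have st0: "0 \<le> st" by (simp add: st_def sin_theta_F_def sum_nonneg)
  have sum_nonneg': "0 \<le> (\<Sum>i\<in>UNIV. 1 - (s i)^2)"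
    using s0 s1 by (intro sum_nonneg) (simp add: abs_square_le_1 abs_le_iff)
  have st2: "st^2 = (\<Sum>i\<in>UNIV. 1 - (s i)^2)" using sum_nonneg' by (simp add: st_def st_def')
  have sumc: "(\<Sum>i\<in>UNIV. 2 - 2 * s i) = 2 * n - 2 * \<sigma>"
    by (simp add: sum_subtractf sum_distrib_left[symmetric] n_def \<sigma>_def)
  have UU: "U \<bullet> U = n" unfolding n_def by (rule ocol_normsq[OF oU])
  have VV: "V \<bullet> V = n" unfolding n_def by (rule ocol_normsq[OF oV])
  have UVinner: "U \<bullet> V = mat 1 \<bullet> (transpose V ** U)"
    by (simp only: inner_commute[of U] mm_inner1[of V "mat 1" U, simplified])
  have "st^2 \<le> (\<Sum>i\<in>UNIV. 2 - 2 * s i)"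
    unfolding st2 by (rule sum_mono) (rule sq_aux1)
  also have "\<dots> \<le> 2 * n - 2 * (U \<bullet> V)"
    using sf(3) UVinner by (simp add: sumc \<sigma>_def)
  also have "\<dots> = norm (U - V) ^ 2"
    by (simp add: power2_norm_eq_inner inner_diff_left inner_diff_right UU VV inner_commute[of V U])
  finally have "st^2 \<le> norm (U - V)^2" .
  then have p2: "st \<le> norm (U - V)" using st0 by (simp add: power2_le_iff_abs_le)
  have part2: "st \<le> sqrt 2 * norm (U - V)"
  proof -
    have "1 \<le> sqrt 2" by simp
    then show ?thesis using p2 mult_right_mono[of 1 "sqrt 2" "norm (U - V)"] by simp
  qed
  define Ob where "Ob = Q ** transpose P"
  have PP: "P ** transpose P = mat 1" using oP matrix_left_right_inverse by blast
  have oOb: "transpose Ob ** Ob = mat 1"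
    unfolding Ob_def by (simp add: matrix_transpose_mul matrix_mul_assoc) (simp add: matrix_mul_assoc[symmetric] oQ PP)
  have ObOb: "Ob ** transpose Ob = mat 1" using oOb matrix_left_right_inverse by blast
  define E where "E = U - V ** Ob"
  have E2: "norm E ^ 2 \<le> 2 * st^2"
  proof -
    have i1: "U \<bullet> (V ** Ob) = \<sigma>"
      using sf(2) unfolding \<sigma>_def Ob_def by (simp only: inner_commute[of U] mm_inner1)
    have i2: "(V ** Ob) \<bullet> (V ** Ob) = n"
      by (simp only: mm_inner1 matrix_mul_assoc oV matrix_mul_lid) (simp add: n_def ocol_normsq[OF oOb])
    have "norm E ^ 2 = 2 * n - 2 * \<sigma>"
      by (simp add: E_def power2_norm_eq_inner inner_diff_left inner_diff_right UU i1 i2 inner_commute[of "V ** Ob" U])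
    also have "\<dots> = (\<Sum>i\<in>UNIV. 2 - 2 * s i)" by (simp add: sumc)
    also have "\<dots> \<le> (\<Sum>i\<in>UNIV. 2 * (1 - (s i)^2))"
      by (rule sum_mono) (use s0 s1 sq_aux2 in blast)
    also have "\<dots> = 2 * st^2" by (simp add: st2 sum_distrib_left)
    finally show ?thesis .
  qed
  have Enorm: "norm E \<le> sqrt 2 * st"
  proof -
    have "norm E = sqrt (norm E ^ 2)" by simp
    also have "\<dots> \<le> sqrt (2 * st^2)" using E2 by (rule real_sqrt_le_mono)
    also have "\<dots> = sqrt 2 * st" using st0 by (simp add: real_sqrt_mult)
    finally show ?thesis .
  qed
  define U1 where "U1 = transpose I_pr ** U"
  define V1 where "V1 = transpose I_pr ** V"
  have symU1: "transpose U1 = U1" unfolding U1_def U_def by (rule cay_sym)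
  have symV1: "transpose V1 = V1" unfolding V1_def V_def by (rule cay_sym)
  have posU1: "0 \<le> x \<bullet> (U1 *v x)" for x
  proof -
    have "0 \<le> spec_norm A" by (rule spec_nonneg)
    then have "(spec_norm A)^2 < 1" using assms(1) by (simp add: power_less_one_iff abs_less_iff)
    then have "0 \<le> (1 - (spec_norm A)^2) / (1 + (spec_norm A)^2) * norm x ^ 2"
      by (intro mult_nonneg_nonneg divide_nonneg_pos) (auto simp: add_pos_nonneg)
    also have "\<dots> \<le> x \<bullet> (U1 *v x)" unfolding U1_def U_def by (rule cay_pos[OF assms(1)])
    finally show ?thesis .
  qed
  have posV1: "m * norm x ^ 2 \<le> x \<bullet> (V1 *v x)" for x
    unfolding m_def a0_def V1_def V_def by (rule cay_pos[OF assms(2)])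
  define E1 where "E1 = transpose I_pr ** E"
  have E1eq: "E1 = U1 - V1 ** Ob"
    by (simp add: E1_def E_def U1_def V1_def mm_diff_l matrix_mul_assoc)
  have E1n: "norm E1 \<le> norm E" unfolding E1_def by (rule ocol_contr_mat[OF Ipr_orth])
  define X where "X = mat 1 - Ob"
  define H where "H = transpose Ob ** V1 ** Ob"
  define G where "G = E1 - transpose E1 ** Ob"
  have Geq: "G = U1 ** X + X ** H"
  proof -
    have tE1: "transpose E1 = U1 - transpose Ob ** V1"
      by (simp add: E1eq transpose_diff matrix_transpose_mul symU1 symV1)
    have g: "G = U1 - V1 ** Ob - (U1 ** Ob - H)"
      by (simp only: G_def tE1) (simp add: E1eq mm_diff_r H_def matrix_mul_assoc)
    have r: "U1 ** X + X ** H = U1 - U1 ** Ob + (H - V1 ** Ob)"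
      by (simp add: X_def mm_diff_l mm_diff_r H_def matrix_mul_assoc ObOb)
    have t: "U1 - V1 ** Ob - (U1 ** Ob - H) = U1 - U1 ** Ob + (H - V1 ** Ob)"
      by (simp add: algebra_simps)
    show ?thesis by (metis g r t)
  qed
  have symH: "transpose H = H"
    by (simp add: H_def matrix_transpose_mul symV1 matrix_mul_assoc)
  have g1: "0 \<le> X \<bullet> (U1 ** X)"
    by (simp only: col_inner) (rule sum_nonneg, rule posU1)
  have g2: "m * norm X ^ 2 \<le> X \<bullet> (X ** H)"
  proof -
    have "X \<bullet> (X ** H) = transpose X \<bullet> transpose (X ** H)"
      by (simp only: inner_transpose)
    also have "\<dots> = transpose X \<bullet> (H ** transpose X)"
      by (simp only: matrix_transpose_mul symH)
    also have "\<dots> = (\<Sum>j\<in>UNIV. column j (transpose X) \<bullet> (H *v column j (transpose X)))"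
      by (rule col_inner)
    also have "\<dots> \<ge> (\<Sum>j\<in>UNIV. m * norm (column j (transpose X)) ^ 2)"
    proof (rule sum_mono)
      fix j
      let ?c = "column j (transpose X)"
      have "?c \<bullet> (H *v ?c) = (Ob *v ?c) \<bullet> (V1 *v (Ob *v ?c))"
        by (simp add: H_def mv_inner matrix_vector_mul_assoc[symmetric] del: transpose_matrix_vector)
      also have "\<dots> \<ge> m * norm (Ob *v ?c) ^ 2" by (rule posV1)
      finally show "m * norm ?c ^ 2 \<le> ?c \<bullet> (H *v ?c)" by (simp add: ocol_norm_vec[OF oOb])
    qed
    also have "(\<Sum>j\<in>UNIV. m * norm (column j (transpose X)) ^ 2) = m * norm X ^ 2"
    proof -
      have "(\<Sum>j\<in>UNIV. norm (column j (transpose X)) ^ 2) = norm X ^ 2"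
        using norm_sq_cols[of "transpose X"] norm_transpose[of X] by (simp del: column_transpose)
      then show ?thesis by (simp add: sum_distrib_left[symmetric] del: column_transpose)
    qed
    finally show ?thesis .
  qed
  have Gn: "norm G \<le> 2 * norm E1"
  proof -
    have "norm G \<le> norm E1 + norm (transpose E1 ** Ob)" unfolding G_def by (rule norm_triangle_ineq4)
    also have "\<dots> = 2 * norm E1" by (simp add: orth_right_norm[OF oOb] norm_transpose)
    finally show ?thesis .
  qed
  have "m * norm X ^ 2 \<le> X \<bullet> G" using g1 g2 by (simp add: Geq inner_add_right)
  also have "\<dots> \<le> norm X * norm G" by (rule Cauchy_Schwarz_ineq2[THEN order_trans[OF abs_ge_self]])
  also have "\<dots> \<le> norm X * (2 * norm E1)" by (rule mult_left_mono[OF Gn norm_ge_zero])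
  finally have "m * norm X ^ 2 \<le> norm X * (2 * norm E1)" .
  then have "m * norm X \<le> 2 * norm E1"
  proof (cases "norm X = 0")
    case True then show ?thesis by simp
  next
    case False
    then have "norm X > 0" by simp
    moreover assume "m * norm X ^ 2 \<le> norm X * (2 * norm E1)"
    ultimately show ?thesis by (simp add: power2_eq_square mult_ac)
  qed
  then have Xn: "norm X \<le> 2 / m * norm E" using m0 E1n by (simp add: field_simps)
  have UVeq: "U - V = E - V ** X"
    by (simp add: E_def X_def mm_diff_l)
  have "norm (U - V) \<le> norm E + norm (V ** X)" unfolding UVeq by (rule norm_triangle_ineq4)
  also have "\<dots> = norm E + norm X" by (simp add: ocol_norm_mat[OF oV])
  also have "\<dots> \<le> (1 + 2 / m) * norm E" using Xn by (simp add: algebra_simps)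
  also have "\<dots> \<le> (1 + 2 / m) * (sqrt 2 * st)"
    using m0 Enorm by (intro mult_left_mono) auto
  also have "\<dots> = sqrt 2 * (1 + 2 / m) * st" by simp
  also have "\<dots> \<le> 4 * (1 + 32 * sqrt 2 * (1 + a0^2)^2 / (1 - a0^2)^2) * st"
    unfolding m_def by (rule mult_right_mono[OF final_const[OF a00 a01] st0])
  finally have part1: "norm (U - V) \<le> 4 * (1 + 32 * sqrt 2 * (1 + a0^2)^2 / (1 - a0^2)^2) * st" .
  show ?thesis using part1 part2
    by (simp add: frob_eq_norm U_def V_def a0_def st_def)
qed

end
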